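(* Suppose $(\Omega,\mathcal{F},\mathsf{P})$ is atomless and $u$ is a law invariant coherent utility on $L^0$ with determining set $\mathcal{D}$. Let $Y$ be a random variable or random vector. Then for every $X\in L^1_s(\mathcal{D})$, $$u^f(X;Y)=u(\mathsf{E}(X\mid Y)).$$
   Context: Let $(\Omega,\mathcal{F},\mathsf{P})$ be a probability space, $L^0$ the space of all real random variables, and $\mathcal{P}$ the set of probability measures on $\mathcal{F}$ absolutely continuous with respect to $\mathsf{P}$; measures $\mathsf{Q}\in\mathcal{P}$ are identified with their densities. For $\mathsf{Q}\in\mathcal{P}$ and $X\in L^0$, $\mathsf{E}_\mathsf{Q}X:=\mathsf{E}_\mathsf{Q}X^+-\mathsf{E}_\mathsf{Q}X^-$ with the convention $\infty-\infty=-\infty$. A coherent utility on $L^0$ is a map $u:L^0\to[-\infty,\infty]$ of the form $u(X)=\inf_{\mathsf{Q}\in\mathcal{D}}\mathsf{E}_\mathsf{Q}X$ for a nonempty $\mathcal{D}\subseteq\mathcal{P}$; its determining set is the largest such set, $\{\mathsf{Q}\in\mathcal{P}:\mathsf{E}_\mathsf{Q}X\ge u(X)\ \forall X\in L^0\}$. $u$ is law invariant if $u(X)=u(X')$ whenever $X$ and $X'$ have the same distribution. For $\mathcal{C}\subseteq\mathcal{P}$, $L^1_s(\mathcal{C})=\{X\in L^0:\lim_{n\to\infty}\sup_{\mathsf{Q}\in\mathcal{C}}\mathsf{E}_\mathsf{Q}|X|I(|X|>n)=0\}$. For a random vector $Y$, $\mathsf{E}(\mathcal{D}\mid Y):=\{\mathsf{E}(Z\mid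 Y):Z\in\mathcal{D}\}$ and the factor utility is $u^f(X;Y):=\inf_{\mathsf{Q}\in\mathsf{E}(\mathcal{D}\mid Y)}\mathsf{E}_\mathsf{Q}X$. *)

theory Defs
  imports "HOL-Probability.Probability"
begin

text \<open>Probability measures absolutely continuous w.r.t. P, identified with their densities.\<close>
definition densities :: "'a measure \<Rightarrow> ('a \<Rightarrow> real) set" where
  "densities M = {Z. Z \<in> borel_measurable M \<and> (\<forall>x\<in>space M. 0 \<le> Z x)
                     \<and> integrable M Z \<and> integral\<^sup>L M Z = 1}"

text \<open>E_Q X = E_Q X^+ - E_Q X^- with the convention infinity - infinity = -infinity.\<close>
definition EQ :: "'a measure \<Rightarrow> ('a \<Rightarrow> real) \<Rightarrow> ('a \<Rightarrow> real) \<Rightarrow> ereal" where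
  "EQ M Z X =
    (let p = (\<integral>\<^sup>+ x. ennreal (Z x * max (X x) 0) \<partial>M);
         n = (\<integral>\<^sup>+ x. ennreal (Z x * max (- X x) 0) \<partial>M)
     in if n = \<top> then - \<infinity> else enn2ereal p - enn2ereal n)"

definition coherent_utility :: "'a measure \<Rightarrow> (('a \<Rightarrow> real) \<Rightarrow> ereal) \<Rightarrow> bool" where
  "coherent_utility M u \<longleftrightarrow>
     (\<exists>D. D \<noteq> {} \<and> D \<subseteq> densities M \<and>
          (\<forall>X\<in>borel_measurable M. u X = (INF Z\<in>D. EQ M Z X)))"

definition determining_set :: "'a measure \<Rightarrow> (('a \<Rightarrow> real) \<Rightarrow> ereal) \<Rightarrow> ('a \<Rightarrow> real) set" where
  "determining_set M u = {Z \<in> densities M. \<forall>X\<in>borel_measurable M. u X \<le> EQ M Z X}"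

definition law_invariant :: "'a measure \<Rightarrow> (('a \<Rightarrow> real) \<Rightarrow> ereal) \<Rightarrow> bool" where
  "law_invariant M u \<longleftrightarrow>
     (\<forall>X\<in>borel_measurable M. \<forall>X'\<in>borel_measurable M.
        distr M borel X = distr M borel X' \<longrightarrow> u X = u X')"

definition atomless :: "'a measure \<Rightarrow> bool" where
  "atomless M \<longleftrightarrow>
     (\<forall>A\<in>sets M. 0 < measure M A \<longrightarrow>
        (\<exists>B\<in>sets M. B \<subseteq> A \<and> 0 < measure M B \<and> measure M B < measure M A))"

definition L1s :: "'a measure \<Rightarrow> ('a \<Rightarrow> real) set \<Rightarrow> ('a \<Rightarrow> real) set" where
  "L1s M C = {X \<in> borel_measurable M.
     (\<lambda>n::nat. SUP Z\<in>C. \<integral>\<^sup>+ x. ennreal (Z x * (if \<bar>X x\<bar> > real n then \<bar>X x\<bar> else 0)) \<partial>M)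
       \<longlonglongrightarrow> 0}"

definition cond_exp_given :: "'a measure \<Rightarrow> ('a \<Rightarrow> 'b::topological_space) \<Rightarrow> ('a \<Rightarrow> real) \<Rightarrow> ('a \<Rightarrow> real)" where
  "cond_exp_given M Y X = real_cond_exp M (vimage_algebra (space M) Y borel) X"

definition factor_utility ::
  "'a measure \<Rightarrow> ('a \<Rightarrow> real) set \<Rightarrow> ('a \<Rightarrow> real) \<Rightarrow> ('a \<Rightarrow> 'b::topological_space) \<Rightarrow> ereal" where
  "factor_utility M D X Y = (INF Q\<in>(\<lambda>Z. cond_exp_given M Y Z) ` D. EQ M Q X)"

end

theory Submission
  imports Defs
begin

lemma atomless_halving:
  assumes P: "prob_space M" and al: "atomless M"
    and A: "A \<in> sets M" "0 < measure M A"
  shows "\<exists>B\<in>sets M. B \<subseteq> A \<and> 0 < measure M B \<and> measure M B \<le> measure M A / 2 ^ n"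
proof (induction n)
  case 0
  then show ?case using A by auto
next
  case (Suc n)
  then obtain B where B: "B \<in> sets M" "B \<subseteq> A" "0 < measure M B" "measure M B \<le> measure M A / 2 ^ n"
    by blast
  then obtain B' where B': "B' \<in> sets M" "B' \<subseteq> B" "0 < measure M B'" "measure M B' < measure M B"
    using al unfolding atomless_def by blast
  interpret prob_space M by fact
  have diff: "measure M (B - B') = measure M B - measure M B'"
    using B B' by (simp add: finite_measure_Diff)
  have eq: "measure M A / 2 ^ n / 2 = measure M A / 2 ^ Suc n" by simp
  show ?case
  proof (cases "measure M B' \<le> measure M B / 2")
    case True
    have "measure M B / 2 \<le> measure M A / 2 ^ n / 2" using B(4) by (rule divide_right_mono) auto
    then have "measure M B' \<le> measure M A / 2 ^ n / 2" using True by linarith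
    then show ?thesis using B B' eq by (intro bexI[of _ B']) auto
  next
    case False
    have "measure M B / 2 \<le> measure M A / 2 ^ n / 2" using B(4) by (rule divide_right_mono) auto
    then have "measure M (B - B') \<le> measure M A / 2 ^ n / 2" using False diff by linarith
    then show ?thesis using B B' diff False eq by (intro bexI[of _ "B - B'"]) auto
  qed
qed

lemma atomless_small:
  assumes P: "prob_space M" and al: "atomless M"
    and A: "A \<in> sets M" "0 < measure M A" and e: "0 < e"
  shows "\<exists>B\<in>sets M. B \<subseteq> A \<and> 0 < measure M B \<and> measure M B < e"
proof -
  interpret prob_space M by fact
  obtain n where n: "(1/2::real) ^ n < e" using real_arch_pow_inv[OF e] by force
  obtain B where B: "B \<in> sets M" "B \<subseteq> A" "0 < measure M B" "measure M B \<le> measure M A / 2 ^ n"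
    using atomless_halving[OF P al A] by blast
  have "measure M A / 2 ^ n \<le> 1 / 2 ^ n"
    by (intro divide_right_mono) auto
  also have "\<dots> = (1/2) ^ n" by (simp add: power_divide)
  finally show ?thesis using B n by (intro bexI[of _ B]) auto
qed

lemma sierpinski:
  assumes P: "prob_space M" and al: "atomless M"
    and C: "C \<in> sets M" and q: "0 \<le> q" "q \<le> measure M C"
  shows "\<exists>B\<in>sets M. B \<subseteq> C \<and> measure M B = q"
proof -
  interpret prob_space M by fact
  define cand where "cand B = {D. D \<in> sets M \<and> D \<subseteq> C - B \<and> measure M B + measure M D \<le> q}" for B
  define s where "s B = (SUP D\<in>cand B. measure M D)" for B
  define nxt where "nxt B = (SOME D. D \<in> cand B \<and> s B / 2 \<le> measure M D)" for B
  define good where "good B \<longleftrightarrow> B \<in> sets M \<and> B \<subseteq> C \<and> measure M B \<le> q" for B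
  have bdd: "bdd_above ((\<lambda>D. measure M D) ` cand B)" for B
    by (rule bdd_aboveI[of _ 1]) auto
  have ne: "good B \<Longrightarrow> {} \<in> cand B" for B unfolding cand_def good_def by auto
  have s_ge: "good B \<Longrightarrow> D \<in> cand B \<Longrightarrow> measure M D \<le> s B" for B D
    unfolding s_def using bdd by (intro cSUP_upper) auto
  have s_nn: "good B \<Longrightarrow> 0 \<le> s B" for B
    using s_ge[of B "{}"] ne by auto
  have nxt: "nxt B \<in> cand B \<and> s B / 2 \<le> measure M (nxt B)" if g: "good B" for B
  proof -
    have "\<exists>D. D \<in> cand B \<and> s B / 2 \<le> measure M D"
    proof (cases "s B = 0")
      case True
      then show ?thesis using ne[OF g] by (intro exI[of _ "{}"]) auto
    next
      case False
      then have "s B / 2 < s B" using s_nn[OF g] by auto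
      then obtain D where "D \<in> cand B" "s B / 2 < measure M D"
        unfolding s_def using ne[OF g] by (subst (asm) less_cSUP_iff) (auto simp: bdd)
      then show ?thesis by (intro exI[of _ D]) auto
    qed
    then show ?thesis unfolding nxt_def by (rule someI_ex)
  qed
  define Bs where "Bs = rec_nat {} (\<lambda>_ B. B \<union> nxt B)"
  have Bs0: "Bs 0 = {}" and BsS: "Bs (Suc n) = Bs n \<union> nxt (Bs n)" for n
    unfolding Bs_def by auto
  have good: "good (Bs n)" for n
  proof (induction n)
    case 0 then show ?case using q by (auto simp: Bs0 good_def)
  next
    case (Suc n)
    have N: "nxt (Bs n) \<in> cand (Bs n)" using nxt[OF Suc] by blast
    have "measure M (Bs n \<union> nxt (Bs n)) = measure M (Bs n) + measure M (nxt (Bs n))"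
      using N Suc by (intro finite_measure_Union) (auto simp: cand_def good_def)
    then show ?case using N Suc by (auto simp: BsS good_def cand_def)
  qed
  have Nn: "nxt (Bs n) \<in> cand (Bs n)" for n using nxt[OF good] by blast
  have mS: "measure M (Bs (Suc n)) = measure M (Bs n) + measure M (nxt (Bs n))" for n
    unfolding BsS using Nn[of n] good[of n] by (intro finite_measure_Union) (auto simp: cand_def good_def)
  have inc: "incseq Bs" by (rule incseq_SucI) (auto simp: BsS)
  define B where "B = (\<Union>n. Bs n)"
  have Bs_sets: "range Bs \<subseteq> sets M" using good by (auto simp: good_def)
  then have Bsets: "B \<in> sets M" unfolding B_def by auto
  have lim: "(\<lambda>n. measure M (Bs n)) \<longlonglongrightarrow> measure M B"
    unfolding B_def by (rule finite_Lim_measure_incseq[OF Bs_sets inc])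
  have BC: "B \<subseteq> C" using good by (auto simp: B_def good_def)
  have Bq: "measure M B \<le> q"
    using lim good by (intro LIMSEQ_le_const2[OF lim]) (auto simp: good_def)
  have le_B: "measure M (Bs n) \<le> measure M B" for n
    unfolding B_def by (intro finite_measure_mono) (use Bsets B_def in auto)
  show ?thesis
  proof (cases "measure M B = q")
    case True then show ?thesis using Bsets BC by auto
  next
    case False
    with Bq have lt: "measure M B < q" by auto
    have "measure M (C - B) = measure M C - measure M B"
      using BC Bsets C by (simp add: finite_measure_Diff)
    then have pos: "0 < measure M (C - B)" using lt q by auto
    obtain D where D: "D \<in> sets M" "D \<subseteq> C - B" "0 < measure M D" "measure M D < q - measure M B"
      using atomless_small[OF P al _ pos, of "q - measure M B"] C Bsets lt by auto
    have Dc: "D \<in> cand (Bs n)" for n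
      using D le_B[of n] by (auto simp: cand_def B_def)
    have half: "measure M D / 2 \<le> measure M (nxt (Bs n))" for n
      using s_ge[OF good Dc[of n]] nxt[OF good[of n]] by auto
    have conv: "convergent (\<lambda>n. measure M (Bs n))" using lim by (auto simp: convergent_def)
    have "(\<lambda>n. measure M (Bs (Suc n)) - measure M (Bs n)) \<longlonglongrightarrow> measure M B - measure M B"
      by (intro tendsto_diff LIMSEQ_Suc lim)
    then have "(\<lambda>n. measure M (nxt (Bs n))) \<longlonglongrightarrow> 0" by (simp add: mS)
    then have "measure M D / 2 \<le> 0"
      by (rule LIMSEQ_le_const) (use half in auto)
    then show ?thesis using D by auto
  qed
qed

definition upper_set :: "'a measure \<Rightarrow> ('a \<Rightarrow> real) \<Rightarrow> 'a set \<Rightarrow> bool" where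
  "upper_set M Z U \<longleftrightarrow> U \<subseteq> space M \<and> (\<forall>x\<in>U. \<forall>y\<in>space M - U. Z y \<le> Z x)"

lemma quantile_exists:
  fixes Z :: "'a \<Rightarrow> real"
  assumes P: "prob_space M" and Zm[measurable]: "Z \<in> borel_measurable M" and p: "0 < p" "p < 1"
  shows "\<exists>t. measure M {x\<in>space M. t < Z x} \<le> p \<and> p \<le> measure M {x\<in>space M. t \<le> Z x}"
proof -
  interpret prob_space M by fact
  define F where "F s = measure M {x\<in>space M. s < Z x}" for s
  have Fsets: "{x\<in>space M. s < Z x} \<in> sets M" for s by measurable
  have Fsets2: "{x\<in>space M. s \<le> Z x} \<in> sets M" for s by measurable
  have Fmono: "s \<le> s' \<Longrightarrow> F s' \<le> F s" for s s'
    unfolding F_def by (intro finite_measure_mono) (auto intro: Fsets)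
  have "(\<lambda>n. F (real n)) \<longlonglongrightarrow> measure M (\<Inter>n. {x\<in>space M. real n < Z x})"
    unfolding F_def
    by (intro finite_Lim_measure_decseq) (auto simp: Fsets decseq_def)
  moreover have "(\<Inter>n. {x\<in>space M. real n < Z x}) = {}"
  proof safe
    fix x assume "x \<in> (\<Inter>n. {x\<in>space M. real n < Z x})"
    moreover obtain n where "Z x < real n" using reals_Archimedean2 by blast
    ultimately have "real n < Z x" "Z x < real n" by auto
    then show "x \<in> {}" by simp
  qed
  ultimately have lim0: "(\<lambda>n. F (real n)) \<longlonglongrightarrow> 0" by simp
  have "\<forall>\<^sub>F n in sequentially. F (real n) < p" by (rule order_tendstoD(2)[OF lim0 p(1)])
  then obtain n0 where n0: "F (real n0) < p" by (auto simp: eventually_sequentially)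
  have "(\<lambda>n. F (- real n)) \<longlonglongrightarrow> measure M (\<Union>n. {x\<in>space M. - real n < Z x})"
    unfolding F_def
    by (intro finite_Lim_measure_incseq) (auto simp: Fsets incseq_def)
  moreover have "(\<Union>n. {x\<in>space M. - real n < Z x}) = space M"
  proof safe
    fix x assume "x \<in> space M"
    moreover obtain n where "- Z x < real n" using reals_Archimedean2 by blast
    then have "- real n < Z x" by linarith
    with \<open>x \<in> space M\<close> show "x \<in> (\<Union>n. {x\<in>space M. - real n < Z x})" by auto
  qed
  ultimately have lim1: "(\<lambda>n. F (- real n)) \<longlonglongrightarrow> 1" by (simp add: prob_space)
  have "\<forall>\<^sub>F n in sequentially. p < F (- real n)" by (rule order_tendstoD(1)[OF lim1 p(2)])
  then obtain n1 where n1: "p < F (- real n1)" by (auto simp: eventually_sequentially)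
  define S where "S = {s. F s \<le> p}"
  have Sne: "real n0 \<in> S" using n0 by (auto simp: S_def)
  have Sbdd: "bdd_below S"
  proof (rule bdd_belowI[of _ "- real n1"])
    fix s assume "s \<in> S"
    show "- real n1 \<le> s"
    proof (rule ccontr)
      assume "\<not> - real n1 \<le> s"
      then show False using Fmono[of s "- real n1"] n1 \<open>s \<in> S\<close> by (auto simp: S_def)
    qed
  qed
  define t where "t = Inf S"
  have above: "F (t + 1 / (real k + 1)) \<le> p" for k
  proof -
    have "t < t + 1 / (real k + 1)" by simp
    then obtain s where "s \<in> S" "s < t + 1 / (real k + 1)"
      unfolding t_def using Sne by (subst (asm) cInf_less_iff) (auto simp: Sbdd)
    then show ?thesis using Fmono[of s "t + 1 / (real k + 1)"] by (auto simp: S_def)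
  qed
  have below: "p < F (t - 1 / (real k + 1))" for k
  proof (rule ccontr)
    assume "\<not> ?thesis"
    then have "t - 1 / (real k + 1) \<in> S" by (auto simp: S_def)
    then have "t \<le> t - 1 / (real k + 1)" unfolding t_def by (intro cInf_lower Sbdd)
    then show False by (simp add: field_simps)
  qed
  have U: "(\<Union>k. {x\<in>space M. t + 1 / (real k + 1) < Z x}) = {x\<in>space M. t < Z x}"
  proof safe
    fix x k assume "t + 1 / (real k + 1) < Z x"
    moreover have "0 < 1 / (real k + 1)" by simp
    ultimately show "t < Z x" by linarith
  next
    fix x assume x: "x \<in> space M" "t < Z x"
    then obtain k where "1 / (real k + 1) < Z x - t"
      using nat_approx_posE[of "Z x - t"] x(2) by (auto simp: add.commute)
    then have "t + 1 / (real k + 1) < Z x" by linarith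
    with x show "x \<in> (\<Union>k. {x\<in>space M. t + 1 / (real k + 1) < Z x})" by auto
  qed
  have incs: "incseq (\<lambda>k. {x\<in>space M. t + 1 / (real k + 1) < Z x})"
  proof (rule incseq_SucI, safe)
    fix k x assume "t + 1 / (real k + 1) < Z x"
    moreover have "1 / (real (Suc k) + 1) \<le> 1 / (real k + 1)" by (simp add: frac_le)
    ultimately show "t + 1 / (real (Suc k) + 1) < Z x" by linarith
  qed
  have "(\<lambda>k. F (t + 1 / (real k + 1))) \<longlonglongrightarrow> measure M (\<Union>k. {x\<in>space M. t + 1 / (real k + 1) < Z x})"
    unfolding F_def by (intro finite_Lim_measure_incseq incs) (auto simp: Fsets)
  then have "(\<lambda>k. F (t + 1 / (real k + 1))) \<longlonglongrightarrow> F t" unfolding U F_def .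
  then have r1: "F t \<le> p" by (rule LIMSEQ_le_const2) (use above in auto)
  have I: "(\<Inter>k. {x\<in>space M. t - 1 / (real k + 1) < Z x}) = {x\<in>space M. t \<le> Z x}"
  proof (intro equalityI subsetI)
    fix x assume "x \<in> {x\<in>space M. t \<le> Z x}"
    then have x: "x \<in> space M" "t \<le> Z x" by auto
    have "t - 1 / (real k + 1) < Z x" for k
    proof -
      have "0 < 1 / (real k + 1)" by simp
      then show ?thesis using x by linarith
    qed
    then show "x \<in> (\<Inter>k. {x\<in>space M. t - 1 / (real k + 1) < Z x})" using x by auto
  next
    fix x assume x: "x \<in> (\<Inter>k. {x\<in>space M. t - 1 / (real k + 1) < Z x})"
    then have xs: "x \<in> space M" by auto
    have "t \<le> Z x"
    proof (rule ccontr)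
      assume "\<not> t \<le> Z x"
      then obtain k where "1 / (real k + 1) < t - Z x"
        using nat_approx_posE[of "t - Z x"] by (auto simp: add.commute)
      then have "\<not> t - 1 / (real k + 1) < Z x" by linarith
      with x show False by auto
    qed
    then show "x \<in> {x\<in>space M. t \<le> Z x}" using xs by auto
  qed
  have decs: "decseq (\<lambda>k. {x\<in>space M. t - 1 / (real k + 1) < Z x})"
  proof (rule decseq_SucI, safe)
    fix k x assume "t - 1 / (real (Suc k) + 1) < Z x"
    moreover have "1 / (real (Suc k) + 1) \<le> 1 / (real k + 1)" by (simp add: frac_le)
    ultimately show "t - 1 / (real k + 1) < Z x" by linarith
  qed
  have "(\<lambda>k. F (t - 1 / (real k + 1))) \<longlonglongrightarrow> measure M (\<Inter>k. {x\<in>space M. t - 1 / (real k + 1) < Z x})"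
    unfolding F_def by (intro finite_Lim_measure_decseq decs) (auto simp: Fsets)
  then have "(\<lambda>k. F (t - 1 / (real k + 1))) \<longlonglongrightarrow> measure M {x\<in>space M. t \<le> Z x}" unfolding I .
  then have r2: "p \<le> measure M {x\<in>space M. t \<le> Z x}"
    by (rule LIMSEQ_le_const) (use below less_imp_le in auto)
  show ?thesis using r1 r2 unfolding F_def by blast
qed

lemma upper_cmp_gt:
  fixes Z :: "'a \<Rightarrow> real"
  assumes "upper_set M Z S"
  shows "S \<subseteq> {x\<in>space M. t < Z x} \<or> {x\<in>space M. t < Z x} \<subseteq> S"
proof (rule ccontr)
  assume "\<not> ?thesis"
  then obtain x y where "x \<in> S" "\<not> t < Z x" "y \<in> space M" "t < Z y" "y \<notin> S"
    using assms unfolding upper_set_def by blast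
  then show False using assms unfolding upper_set_def by force
qed

lemma upper_cmp_ge:
  fixes Z :: "'a \<Rightarrow> real"
  assumes "upper_set M Z S"
  shows "S \<subseteq> {x\<in>space M. t \<le> Z x} \<or> {x\<in>space M. t \<le> Z x} \<subseteq> S"
proof (rule ccontr)
  assume "\<not> ?thesis"
  then obtain x y where "x \<in> S" "\<not> t \<le> Z x" "y \<in> space M" "t \<le> Z y" "y \<notin> S"
    using assms unfolding upper_set_def by blast
  then show False using assms unfolding upper_set_def by force
qed

lemma upper_step:
  fixes Z :: "'a \<Rightarrow> real"
  assumes P: "prob_space M" and al: "atomless M" and Zm[measurable]: "Z \<in> borel_measurable M"
    and L: "L \<in> sets M" "upper_set M Z L" and R: "R \<in> sets M" "upper_set M Z R"
    and LR: "L \<subseteq> R" and p: "measure M L \<le> p" "p \<le> measure M R"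
  shows "\<exists>U\<in>sets M. upper_set M Z U \<and> L \<subseteq> U \<and> U \<subseteq> R \<and> measure M U = p"
proof -
  interpret prob_space M by fact
  consider "p = measure M L" | "p = measure M R" | "measure M L < p" "p < measure M R"
    using p by linarith
  then show ?thesis
  proof cases
    case 1 then show ?thesis using L LR by auto
  next
    case 2 then show ?thesis using R LR by auto
  next
    case 3
    have "0 < p" using 3 measure_nonneg[of M L] by linarith
    moreover have "p < 1" using 3 prob_le_1[of R] by linarith
    ultimately obtain t where t: "measure M {x\<in>space M. t < Z x} \<le> p"
      "p \<le> measure M {x\<in>space M. t \<le> Z x}"
      using quantile_exists[OF P Zm] by blast
    define Gt where "Gt = {x\<in>space M. t < Z x}"
    define Ge where "Ge = {x\<in>space M. t \<le> Z x}"
    have [measurable]: "Gt \<in> sets M" "Ge \<in> sets M" unfolding Gt_def Ge_def by measurable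
    define A where "A = (Gt \<inter> R) \<union> L"
    define Cs where "Cs = (Ge \<inter> R) \<union> L"
    have As: "A \<in> sets M" and Cs: "Cs \<in> sets M" unfolding A_def Cs_def using L R by auto
    have AC: "A \<subseteq> Cs" unfolding A_def Cs_def Gt_def Ge_def by auto
    have PA: "measure M A \<le> p"
    proof -
      from upper_cmp_gt[OF L(2), of t] have "L \<subseteq> Gt \<or> Gt \<subseteq> L" unfolding Gt_def .
      then show ?thesis
      proof
        assume "L \<subseteq> Gt"
        then have "A \<subseteq> Gt" unfolding A_def by auto
        then have "measure M A \<le> measure M Gt" by (intro finite_measure_mono) auto
        then show ?thesis using t unfolding Gt_def by linarith
      next
        assume "Gt \<subseteq> L"
        then have "A = L" unfolding A_def by auto
        then show ?thesis using 3 by auto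
      qed
    qed
    have PC: "p \<le> measure M Cs"
    proof -
      from upper_cmp_ge[OF R(2), of t] have "R \<subseteq> Ge \<or> Ge \<subseteq> R" unfolding Ge_def .
      then show ?thesis
      proof
        assume "R \<subseteq> Ge"
        then have "R \<subseteq> Cs" unfolding Cs_def by auto
        then have "measure M R \<le> measure M Cs" using Cs by (intro finite_measure_mono) auto
        then show ?thesis using 3 by linarith
      next
        assume "Ge \<subseteq> R"
        then have "Ge \<subseteq> Cs" unfolding Cs_def by auto
        then have "measure M Ge \<le> measure M Cs" using Cs by (intro finite_measure_mono) auto
        then show ?thesis using t unfolding Ge_def by linarith
      qed
    qed
    have mCA: "measure M (Cs - A) = measure M Cs - measure M A"
      using As Cs AC by (simp add: finite_measure_Diff)
    obtain S where S: "S \<in> sets M" "S \<subseteq> Cs - A" "measure M S = p - measure M A"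
      using sierpinski[OF P al, of "Cs - A" "p - measure M A"] As Cs PA PC mCA by auto
    define U where "U = A \<union> S"
    have Us: "U \<in> sets M" unfolding U_def using As S by auto
    have mU: "measure M U = p"
      unfolding U_def using S As by (subst finite_measure_Union) auto
    have LU: "L \<subseteq> U" unfolding U_def A_def by auto
    have UR: "U \<subseteq> R" unfolding U_def using S LR by (auto simp: A_def Cs_def)
    have upU: "upper_set M Z U" unfolding upper_set_def
    proof (intro conjI ballI)
      show "U \<subseteq> space M" using UR R(2) by (auto simp: upper_set_def)
    next
      fix x y assume x: "x \<in> U" and y: "y \<in> space M - U"
      show "Z y \<le> Z x"
      proof (cases "x \<in> L")
        case True
        then show ?thesis using y LU L(2) unfolding upper_set_def by auto
      next
        case False
        then have xR: "x \<in> R" "t \<le> Z x" using x S unfolding U_def A_def Cs_def Gt_def Ge_def by auto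
        show ?thesis
        proof (cases "y \<in> R")
          case False
          then show ?thesis using xR y R(2) unfolding upper_set_def by auto
        next
          case True
          then have "\<not> t < Z y" using y unfolding U_def A_def Gt_def by auto
          then show ?thesis using xR by linarith
        qed
      qed
    qed
    show ?thesis using Us mU LU UR upU by auto
  qed
qed

lemma upper_chain:
  fixes Z :: "'a \<Rightarrow> real" and p :: "nat \<Rightarrow> real"
  assumes P: "prob_space M" and al: "atomless M" and Zm[measurable]: "Z \<in> borel_measurable M"
    and p: "\<And>k. 0 \<le> p k" "\<And>k. p k \<le> 1" "\<And>k. p (Suc k) \<le> p k"
  shows "\<exists>U. \<forall>k. U k \<in> sets M \<and> upper_set M Z (U k) \<and> measure M (U k) = p k \<and> U (Suc k) \<subseteq> U k"
proof -
  interpret prob_space M by fact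
  define stp where "stp R q = (SOME U. U \<in> sets M \<and> upper_set M Z U \<and> U \<subseteq> R \<and> measure M U = q)" for R q
  have stp: "stp R q \<in> sets M \<and> upper_set M Z (stp R q) \<and> stp R q \<subseteq> R \<and> measure M (stp R q) = q"
    if "R \<in> sets M" "upper_set M Z R" "0 \<le> q" "q \<le> measure M R" for R q
  proof -
    have "\<exists>U. U \<in> sets M \<and> upper_set M Z U \<and> U \<subseteq> R \<and> measure M U = q"
      using upper_step[OF P al Zm, of "{}" R q] that by (auto simp: upper_set_def)
    then show ?thesis unfolding stp_def by (rule someI_ex)
  qed
  define U where "U = rec_nat (stp (space M) (p 0)) (\<lambda>k V. stp V (p (Suc k)))"
  have U0: "U 0 = stp (space M) (p 0)" and US: "U (Suc k) = stp (U k) (p (Suc k))" for k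
    unfolding U_def by auto
  have inv: "U k \<in> sets M \<and> upper_set M Z (U k) \<and> measure M (U k) = p k" for k
  proof (induction k)
    case 0
    have "upper_set M Z (space M)" by (auto simp: upper_set_def)
    then show ?case using stp[of "space M" "p 0"] p by (auto simp: U0 prob_space)
  next
    case (Suc k)
    then show ?case using stp[of "U k" "p (Suc k)"] p[of "Suc k"] p(3)[of k] by (auto simp: US)
  qed
  have "U (Suc k) \<subseteq> U k" for k
    using stp[of "U k" "p (Suc k)"] inv[of k] p[of "Suc k"] p(3)[of k] by (auto simp: US)
  then show ?thesis using inv by blast
qed

lemma bathtub:
  fixes Z h :: "'a \<Rightarrow> real"
  assumes P: "prob_space M" and Zi: "integrable M Z" and Zp: "\<And>x. x \<in> space M \<Longrightarrow> 0 \<le> Z x"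
    and U: "U \<in> sets M" "upper_set M Z U"
    and hm[measurable]: "h \<in> borel_measurable M" and h01: "AE x in M. 0 \<le> h x \<and> h x \<le> 1"
    and hint: "integral\<^sup>L M h = measure M U"
  shows "integrable M (\<lambda>x. Z x * h x)" "(\<integral>x. Z x * h x \<partial>M) \<le> (\<integral>x. Z x * indicator U x \<partial>M)"
proof -
  interpret prob_space M by fact
  have Zm[measurable]: "Z \<in> borel_measurable M" using Zi by auto
  show Zh: "integrable M (\<lambda>x. Z x * h x)"
  proof (rule Bochner_Integration.integrable_bound[OF Zi])
    show "(\<lambda>x. Z x * h x) \<in> borel_measurable M" by measurable
    show "AE x in M. norm (Z x * h x) \<le> norm (Z x)"
      using h01 by eventually_elim (auto simp: abs_mult intro!: mult_left_le)
  qed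
  have hi: "integrable M h"
    using h01 by (intro integrable_const_bound[of _ 1]) auto
  have ZU: "integrable M (\<lambda>x. Z x * indicator U x)"
    using U Zi by (intro integrable_real_mult_indicator) auto
  show "(\<integral>x. Z x * h x \<partial>M) \<le> (\<integral>x. Z x * indicator U x \<partial>M)"
  proof (cases "U = {}")
    case True
    then have "integral\<^sup>L M h = 0" using hint by simp
    then have "AE x in M. h x = 0"
      using hi h01 by (subst (asm) integral_nonneg_eq_0_iff_AE) auto
    then have "AE x in M. Z x * h x = 0" by eventually_elim auto
    then have "(\<integral>x. Z x * h x \<partial>M) = 0" by (simp add: integral_eq_zero_AE)
    then show ?thesis using True by simp
  next
    case Une: False
    show ?thesis
    proof (cases "space M \<subseteq> U")
      case True
      have "AE x in M. Z x * h x \<le> Z x * indicator U x"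
        using h01 AE_space
      proof eventually_elim
        case (elim x) then have "x \<in> U" using True by auto
        then show ?case using elim Zp[of x] by (auto intro!: mult_left_le)
      qed
      then show ?thesis using Zh ZU by (intro integral_mono_AE) auto
    next
      case False
      then obtain y where y: "y \<in> space M" "y \<notin> U" by auto
      define t where "t = Inf (Z ` U)"
      have bdd: "bdd_below (Z ` U)"
        using U(2) y unfolding upper_set_def by (intro bdd_belowI[of _ "Z y"]) auto
      have tU: "t \<le> Z x" if "x \<in> U" for x unfolding t_def using that bdd by (intro cInf_lower) auto
      have tnU: "Z x \<le> t" if "x \<in> space M" "x \<notin> U" for x
        unfolding t_def using Une U(2) that unfolding upper_set_def by (intro cInf_greatest) auto
      have "AE x in M. Z x * h x \<le> Z x * indicator U x + t * (h x - indicator U x)"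
        using h01 AE_space
      proof eventually_elim
        case (elim x)
        show ?case
        proof (cases "x \<in> U")
          case True
          then have "t * (1 - h x) \<le> Z x * (1 - h x)" using elim tU[of x] by (intro mult_right_mono) auto
          then show ?thesis using True by (simp add: algebra_simps)
        next
          case False
          then have "Z x * h x \<le> t * h x" using elim tnU[of x] by (intro mult_right_mono) auto
          then show ?thesis using False by simp
        qed
      qed
      have iU: "integrable M (\<lambda>x. indicator U x :: real)"
        using U by (intro integrable_real_indicator) (auto simp: less_top[symmetric])
      have iS: "integrable M (\<lambda>x. Z x * indicator U x + t * (h x - indicator U x))"
        using ZU hi iU by auto
      note this[simp]
      then have "(\<integral>x. Z x * h x \<partial>M) \<le> (\<integral>x. Z x * indicator U x + t * (h x - indicator U x) \<partial>M)"
        using Zh ZU hi U iS \<open>AE x in M. Z x * h x \<le> _\<close> by (intro integral_mono_AE) auto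
      also have "\<dots> = (\<integral>x. Z x * indicator U x \<partial>M) + t * (integral\<^sup>L M h - measure M U)"
        using Zh ZU hi U iU by (simp add: integral_diff)
      finally show ?thesis using hint by simp
    qed
  qed
qed

definition cntA :: "nat \<Rightarrow> (nat \<Rightarrow> 'a set) \<Rightarrow> 'a \<Rightarrow> nat" where
  "cntA N A x = card {k\<in>{..<N}. x \<in> A k}"

lemma anti_of_dec:
  assumes dec: "\<forall>k. A (Suc k) \<subseteq> A k" and "i \<le> j"
  shows "A j \<subseteq> A i"
  using assms(2)
proof (induction j)
  case 0 then show ?case by auto
next
  case (Suc j)
  then show ?case using dec[rule_format, of j] by (cases "i = Suc j") auto
qed

lemma cntA_ge:
  assumes dec: "\<forall>k. A (Suc k) \<subseteq> A k" and m: "0 < m" "m \<le> N"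
  shows "m \<le> cntA N A x \<longleftrightarrow> x \<in> A (m - 1)"
proof
  assume m_le: "m \<le> cntA N A x"
  show "x \<in> A (m - 1)"
  proof (rule ccontr)
    assume nx: "x \<notin> A (m - 1)"
    have "{k\<in>{..<N}. x \<in> A k} \<subseteq> {..<m - 1}"
    proof
      fix k assume "k \<in> {k\<in>{..<N}. x \<in> A k}"
      then have "x \<in> A k" by auto
      then have "\<not> m - 1 \<le> k" using anti_of_dec[of A, OF dec, of "m - 1" k] nx by auto
      then show "k \<in> {..<m - 1}" by auto
    qed
    then have "card {k\<in>{..<N}. x \<in> A k} \<le> card {..<m - 1}"
      by (intro card_mono) auto
    then have "cntA N A x \<le> m - 1" unfolding cntA_def by simp
    then show False using m m_le by linarith
  qed
next
  assume xA: "x \<in> A (m - 1)"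
  have "{..<m} \<subseteq> {k\<in>{..<N}. x \<in> A k}"
  proof (intro subsetI)
    fix k assume "k \<in> {..<m}"
    then have "k \<le> m - 1" "k < N" using m by auto
    then show "k \<in> {k\<in>{..<N}. x \<in> A k}" using anti_of_dec[of A, OF dec, of k "m - 1"] xA by auto
  qed
  then have "card {..<m} \<le> card {k\<in>{..<N}. x \<in> A k}"
    by (intro card_mono) auto
  then show "m \<le> cntA N A x" unfolding cntA_def by simp
qed


lemma cntA_le: "cntA N A x \<le> N"
  unfolding cntA_def using card_mono[of "{..<N}" "{k\<in>{..<N}. x \<in> A k}"] by auto

definition GeA :: "'a measure \<Rightarrow> nat \<Rightarrow> (nat \<Rightarrow> 'a set) \<Rightarrow> nat \<Rightarrow> 'a set" where
  "GeA M N A m = {x\<in>space M. m \<le> cntA N A x}"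

lemma GeA_eq:
  assumes dec: "\<forall>k. A (Suc k) \<subseteq> A k"
  shows "GeA M N A m = (if m = 0 then space M else if m \<le> N then A (m - 1) \<inter> space M else {})"
  using cntA_ge[OF dec, of m N] cntA_le[of N A] unfolding GeA_def
  by (auto simp: not_le) (meson le_trans not_le)+

lemma GeA_sets:
  assumes dec: "\<forall>k. A (Suc k) \<subseteq> A k" and As: "\<forall>k. A k \<in> sets M"
  shows "GeA M N A m \<in> sets M"
  using As by (simp add: GeA_eq[OF dec])

lemma GeA_measure:
  assumes P: "prob_space M" and dec: "\<forall>k. A (Suc k) \<subseteq> A k" and As: "\<forall>k. A k \<in> sets M"
    and dec': "\<forall>k. B (Suc k) \<subseteq> B k" and Bs: "\<forall>k. B k \<in> sets M"
    and eq: "\<forall>k. measure M (A k) = measure M (B k)"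
  shows "emeasure M (GeA M N A m) = emeasure M (GeA M N B m)"
proof -
  interpret prob_space M by fact
  have "A k \<inter> space M = A k" "B k \<inter> space M = B k" for k
    using sets.sets_into_space As Bs by auto
  then show ?thesis using eq
    by (simp add: GeA_eq[OF dec] GeA_eq[OF dec'] emeasure_eq_measure)
qed

lemma cntA_vimage:
  "cntA N A -` {m} \<inter> space M = GeA M N A m - GeA M N A (Suc m)"
  unfolding GeA_def by auto

lemma cntA_measurable:
  assumes dec: "\<forall>k. A (Suc k) \<subseteq> A k" and As: "\<forall>k. A k \<in> sets M"
  shows "cntA N A \<in> measurable M (count_space UNIV)"
  unfolding measurable_count_space_eq2_countable
  using GeA_sets[OF dec As] by (auto simp: cntA_vimage)

lemma distr_cntA_eq:
  assumes P: "prob_space M" and dec: "\<forall>k. A (Suc k) \<subseteq> A k" and As: "\<forall>k. A k \<in> sets M"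
    and dec': "\<forall>k. B (Suc k) \<subseteq> B k" and Bs: "\<forall>k. B k \<in> sets M"
    and eq: "\<forall>k. measure M (A k) = measure M (B k)"
  shows "distr M (count_space UNIV) (cntA N A) = distr M (count_space UNIV) (cntA N B)"
proof (rule measure_eqI_countable[where A=UNIV])
  interpret prob_space M by fact
  fix m :: nat
  have subA: "GeA M N A (Suc m) \<subseteq> GeA M N A m" and subB: "GeA M N B (Suc m) \<subseteq> GeA M N B m"
    unfolding GeA_def by auto
  have "emeasure (distr M (count_space UNIV) (cntA N A)) {m} = emeasure M (GeA M N A m - GeA M N A (Suc m))"
    using cntA_measurable[OF dec As] by (simp add: emeasure_distr cntA_vimage)
  also have "\<dots> = emeasure M (GeA M N A m) - emeasure M (GeA M N A (Suc m))"
    using subA GeA_sets[OF dec As] by (intro emeasure_Diff) auto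
  also have "\<dots> = emeasure M (GeA M N B m) - emeasure M (GeA M N B (Suc m))"
    using GeA_measure[OF P dec As dec' Bs eq] by simp
  also have "\<dots> = emeasure M (GeA M N B m - GeA M N B (Suc m))"
    using subB GeA_sets[OF dec' Bs] by (intro emeasure_Diff[symmetric]) auto
  also have "\<dots> = emeasure (distr M (count_space UNIV) (cntA N B)) {m}"
    using cntA_measurable[OF dec' Bs] by (simp add: emeasure_distr cntA_vimage)
  finally show "emeasure (distr M (count_space UNIV) (cntA N A)) {m} = emeasure (distr M (count_space UNIV) (cntA N B)) {m}" .
qed auto

lemma sum_ind_cntA:
  "(\<Sum>k<N. d * indicator (A k) x) = d * real (cntA N A x)"
proof -
  have "(\<Sum>k<N. d * indicator (A k) x) = d * (\<Sum>k<N. indicator (A k) x)"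
    by (simp add: sum_distrib_left)
  also have "(\<Sum>k<N. indicator (A k) x :: real) = real (card {k\<in>{..<N}. x \<in> A k})"
    by (simp add: indicator_def sum.If_cases Int_def)
  finally show ?thesis unfolding cntA_def .
qed

lemma distr_layers_eq:
  fixes d :: real
  assumes P: "prob_space M" and dec: "\<forall>k. A (Suc k) \<subseteq> A k" and As: "\<forall>k. A k \<in> sets M"
    and dec': "\<forall>k. B (Suc k) \<subseteq> B k" and Bs: "\<forall>k. B k \<in> sets M"
    and eq: "\<forall>k. measure M (A k) = measure M (B k)"
  shows "distr M borel (\<lambda>x. - (\<Sum>k<N. d * indicator (A k) x)) = distr M borel (\<lambda>x. - (\<Sum>k<N. d * indicator (B k) x))"
proof -
  define g where "g = (\<lambda>m::nat. - (d * real m))"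
  have gm: "g \<in> measurable (count_space UNIV) borel" by simp
  have "(\<lambda>x. - (\<Sum>k<N. d * indicator (A k) x)) = g \<circ> cntA N A"
    "(\<lambda>x. - (\<Sum>k<N. d * indicator (B k) x)) = g \<circ> cntA N B"
    by (auto simp: g_def sum_ind_cntA)
  moreover have "distr M borel (g \<circ> cntA N A) = distr M borel (g \<circ> cntA N B)"
    using distr_distr[OF gm cntA_measurable[OF dec As, of N]] distr_distr[OF gm cntA_measurable[OF dec' Bs, of N]]
      distr_cntA_eq[OF P dec As dec' Bs eq, of N] by metis
  ultimately show ?thesis by simp
qed

lemma det_set_INF:
  assumes cu: "coherent_utility M u" and V: "V \<in> borel_measurable M"
  shows "u V = (INF Z\<in>determining_set M u. EQ M Z V)"
proof -
  obtain D0 where D0: "D0 \<noteq> {}" "D0 \<subseteq> densities M" "\<forall>X\<in>borel_measurable M. u X = (INF Z\<in>D0. EQ M Z X)"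
    using cu unfolding coherent_utility_def by blast
  have sub: "D0 \<subseteq> determining_set M u"
    unfolding determining_set_def using D0 by (auto intro: INF_lower)
  have "(INF Z\<in>determining_set M u. EQ M Z V) \<le> (INF Z\<in>D0. EQ M Z V)"
    by (rule INF_superset_mono[OF sub]) auto
  also have "\<dots> = u V" using D0 V by auto
  finally show ?thesis using V unfolding determining_set_def by (auto intro!: INF_greatest antisym)
qed

lemma det_set_nonempty:
  assumes cu: "coherent_utility M u"
  shows "determining_set M u \<noteq> {}"
proof -
  obtain D0 where D0: "D0 \<noteq> {}" "D0 \<subseteq> densities M" "\<forall>X\<in>borel_measurable M. u X = (INF Z\<in>D0. EQ M Z X)"
    using cu unfolding coherent_utility_def by blast
  have sub: "D0 \<subseteq> determining_set M u"
    unfolding determining_set_def using D0 by (auto intro: INF_lower)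
  then show ?thesis using D0 by auto
qed

lemma det_set_density:
  assumes "Z \<in> determining_set M u"
  shows "Z \<in> borel_measurable M" "\<And>x. x \<in> space M \<Longrightarrow> 0 \<le> Z x" "integrable M Z" "integral\<^sup>L M Z = 1"
  using assms unfolding determining_set_def densities_def by auto

lemma EQ_neg:
  assumes Zp: "\<And>x. x \<in> space M \<Longrightarrow> 0 \<le> Z x" and xp: "\<And>x. x \<in> space M \<Longrightarrow> 0 \<le> \<xi> x"
  shows "EQ M Z (\<lambda>x. - \<xi> x) = - enn2ereal (\<integral>\<^sup>+ x. ennreal (Z x * \<xi> x) \<partial>M)"
proof -
  have p: "(\<integral>\<^sup>+ x. ennreal (Z x * max (- \<xi> x) 0) \<partial>M) = 0"
    using xp by (subst nn_integral_cong[where v="\<lambda>x. 0"]) (auto simp: max_def)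
  have n: "(\<integral>\<^sup>+ x. ennreal (Z x * max (- (- \<xi> x)) 0) \<partial>M) = (\<integral>\<^sup>+ x. ennreal (Z x * \<xi> x) \<partial>M)"
    by (intro nn_integral_cong) (simp add: xp max_absorb1)
  show ?thesis unfolding EQ_def Let_def p n by (auto simp: zero_ennreal.rep_eq)
qed

lemma bound_transfer:
  fixes \<xi> \<xi>' :: "'a \<Rightarrow> real"
  assumes cu: "coherent_utility M u" and li: "law_invariant M u"
    and m[measurable]: "\<xi> \<in> borel_measurable M" "\<xi>' \<in> borel_measurable M"
    and p: "\<And>x. x \<in> space M \<Longrightarrow> 0 \<le> \<xi> x" "\<And>x. x \<in> space M \<Longrightarrow> 0 \<le> \<xi>' x"
    and dist: "distr M borel (\<lambda>x. - \<xi> x) = distr M borel (\<lambda>x. - \<xi>' x)"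
    and bound: "\<forall>Z'\<in>determining_set M u. (\<integral>\<^sup>+ x. ennreal (Z' x * \<xi> x) \<partial>M) \<le> C"
    and Z: "Z \<in> determining_set M u"
  shows "(\<integral>\<^sup>+ x. ennreal (Z x * \<xi>' x) \<partial>M) \<le> C"
proof -
  have "u (\<lambda>x. - \<xi> x) = u (\<lambda>x. - \<xi>' x)"
    using li dist unfolding law_invariant_def by auto
  moreover have "- enn2ereal C \<le> u (\<lambda>x. - \<xi> x)"
  proof -
    have "- enn2ereal C \<le> EQ M Z' (\<lambda>x. - \<xi> x)" if "Z' \<in> determining_set M u" for Z'
      using EQ_neg[of M Z' \<xi>] det_set_density[OF that] p bound that by (auto simp: less_eq_ennreal.rep_eq[symmetric])
    then show ?thesis by (subst det_set_INF[OF cu]) (auto intro: INF_greatest)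
  qed
  moreover have "u (\<lambda>x. - \<xi>' x) \<le> EQ M Z (\<lambda>x. - \<xi>' x)"
    using Z unfolding determining_set_def by auto
  moreover have "EQ M Z (\<lambda>x. - \<xi>' x) = - enn2ereal (\<integral>\<^sup>+ x. ennreal (Z x * \<xi>' x) \<partial>M)"
    using EQ_neg[of M Z \<xi>'] det_set_density[OF Z] p by auto
  ultimately have "- enn2ereal C \<le> - enn2ereal (\<integral>\<^sup>+ x. ennreal (Z x * \<xi>' x) \<partial>M)"
    by order
  then have "enn2ereal (\<integral>\<^sup>+ x. ennreal (Z x * \<xi>' x) \<partial>M) \<le> enn2ereal C"
    by (simp only: ereal_minus_le_minus)
  then show ?thesis by (simp add: less_eq_ennreal.rep_eq)
qed

lemma K_simple:
  fixes h :: "nat \<Rightarrow> 'a \<Rightarrow> real" and A :: "nat \<Rightarrow> 'a set" and d :: real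
  assumes P: "prob_space M" and al: "atomless M" and cu: "coherent_utility M u" and li: "law_invariant M u"
    and Z: "Z \<in> determining_set M u"
    and As: "\<forall>k. A k \<in> sets M" and dec: "\<forall>k. A (Suc k) \<subseteq> A k" and d: "0 \<le> d"
    and hm: "\<forall>k. h k \<in> borel_measurable M" and h01: "\<forall>k. AE x in M. 0 \<le> h k x \<and> h k x \<le> 1"
    and hint: "\<forall>k. integral\<^sup>L M (h k) = measure M (A k)"
    and bound: "\<forall>Z'\<in>determining_set M u. (\<integral>\<^sup>+ x. ennreal (Z' x * (\<Sum>k<N. d * indicator (A k) x)) \<partial>M) \<le> C"
  shows "ennreal (\<Sum>k<N. d * (\<integral>x. Z x * h k x \<partial>M)) \<le> C"
proof -
  interpret prob_space M by fact
  note Zd = det_set_density[OF Z]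
  have Zm[measurable]: "Z \<in> borel_measurable M" by (rule Zd(1))
  have am: "measure M (A (Suc k)) \<le> measure M (A k)" for k
    using As dec by (intro finite_measure_mono) auto
  obtain U where U: "\<forall>k. U k \<in> sets M \<and> upper_set M Z (U k) \<and> measure M (U k) = measure M (A k) \<and> U (Suc k) \<subseteq> U k"
    using upper_chain[OF P al Zm, of "\<lambda>k. measure M (A k)"] am by auto
  have Us: "\<forall>k. U k \<in> sets M" and decU: "\<forall>k. U (Suc k) \<subseteq> U k"
    and eqm: "\<forall>k. measure M (A k) = measure M (U k)" using U by auto
  define \<xi> where "\<xi> x = (\<Sum>k<N. d * indicator (A k) x)" for x
  define \<xi>' where "\<xi>' x = (\<Sum>k<N. d * indicator (U k) x)" for x
  have [measurable]: "\<xi> \<in> borel_measurable M" "\<xi>' \<in> borel_measurable M"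
    unfolding \<xi>_def \<xi>'_def using As Us by auto
  have dist: "distr M borel (\<lambda>x. - \<xi> x) = distr M borel (\<lambda>x. - \<xi>' x)"
    unfolding \<xi>_def \<xi>'_def by (rule distr_layers_eq[OF P dec As decU Us eqm])
  have bd': "(\<integral>\<^sup>+ x. ennreal (Z x * \<xi>' x) \<partial>M) \<le> C"
    by (rule bound_transfer[OF cu li, of \<xi> \<xi>']) (use d dist bound Z in \<open>auto simp: \<xi>_def \<xi>'_def intro!: sum_nonneg\<close>)
  have ZU: "integrable M (\<lambda>x. Z x * indicator (U k) x)" for k
    using Us Zd by (intro integrable_real_mult_indicator) auto
  have eqf: "(\<lambda>x. Z x * \<xi>' x) = (\<lambda>x. \<Sum>k<N. d * (Z x * indicator (U k) x))"
    unfolding \<xi>'_def sum_distrib_left by (intro ext sum.cong refl) (simp only: ac_simps)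
  have bt: "(\<integral>x. Z x * h k x \<partial>M) \<le> (\<integral>x. Z x * indicator (U k) x \<partial>M)" for k
    using bathtub[OF P Zd(3) Zd(2), of "U k" "h k"] U hm h01 hint by auto
  have "(\<Sum>k<N. d * (\<integral>x. Z x * h k x \<partial>M)) \<le> (\<Sum>k<N. d * (\<integral>x. Z x * indicator (U k) x \<partial>M))"
    using bt d by (intro sum_mono mult_left_mono) auto
  also have "\<dots> = (\<integral>x. (\<Sum>k<N. d * (Z x * indicator (U k) x)) \<partial>M)"
    using ZU by (simp add: integral_sum)
  also have "\<dots> = (\<integral>x. Z x * \<xi>' x \<partial>M)"
    by (simp only: eqf)
  finally have le: "(\<Sum>k<N. d * (\<integral>x. Z x * h k x \<partial>M)) \<le> (\<integral>x. Z x * \<xi>' x \<partial>M)" .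
  have int': "integrable M (\<lambda>x. Z x * \<xi>' x)"
    unfolding eqf using ZU by auto
  have "ennreal (\<integral>x. Z x * \<xi>' x \<partial>M) = (\<integral>\<^sup>+ x. ennreal (Z x * \<xi>' x) \<partial>M)"
    using int' Zd d by (intro nn_integral_eq_integral[symmetric]) (auto simp: \<xi>'_def intro!: sum_nonneg AE_I2)
  then have "ennreal (\<Sum>k<N. d * (\<integral>x. Z x * h k x \<partial>M)) \<le> (\<integral>\<^sup>+ x. ennreal (Z x * \<xi>' x) \<partial>M)"
    using le ennreal_leI by metis
  then show ?thesis using bd' by order
qed

lemma layer_count:
  fixes v c :: real
  assumes v: "0 \<le> v" and c: "0 < c"
  shows "(\<Sum>k<N. c * (if real (Suc k) * c \<le> v then 1 else 0)) = c * real (min N (nat \<lfloor>v / c\<rfloor>))"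
proof -
  have set: "{k\<in>{..<N}. real (Suc k) * c \<le> v} = {..<min N (nat \<lfloor>v / c\<rfloor>)}"
  proof -
    have "real (Suc k) * c \<le> v \<longleftrightarrow> k < nat \<lfloor>v / c\<rfloor>" for k
    proof -
      have "real (Suc k) * c \<le> v \<longleftrightarrow> real (Suc k) \<le> v / c" using c by (simp add: pos_le_divide_eq)
      also have "\<dots> \<longleftrightarrow> int (Suc k) \<le> \<lfloor>v / c\<rfloor>" by (simp add: le_floor_iff)
      also have "\<dots> \<longleftrightarrow> k < nat \<lfloor>v / c\<rfloor>" by linarith
      finally show ?thesis .
    qed
    then show ?thesis by (simp add: set_eq_iff)
  qed
  have "(\<Sum>k<N. c * (if real (Suc k) * c \<le> v then 1 else 0)) = c * (\<Sum>k<N. (if real (Suc k) * c \<le> v then 1 else 0))"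
    by (simp add: sum_distrib_left)
  also have "(\<Sum>k<N. (if real (Suc k) * c \<le> v then 1 else 0 :: real)) = real (card {k\<in>{..<N}. real (Suc k) * c \<le> v})"
    by (simp add: sum.If_cases Int_def)
  also have "\<dots> = real (min N (nat \<lfloor>v / c\<rfloor>))" unfolding set by simp
  finally show ?thesis .
qed

definition apx :: "'a measure \<Rightarrow> ('a \<Rightarrow> real) \<Rightarrow> nat \<Rightarrow> nat \<Rightarrow> 'a set" where
  "apx M \<xi> n k = {x\<in>space M. real (Suc k) * (1 / (real n + 1)) \<le> \<xi> x}"

definition apxf :: "'a measure \<Rightarrow> ('a \<Rightarrow> real) \<Rightarrow> nat \<Rightarrow> 'a \<Rightarrow> real" where
  "apxf M \<xi> n x = (\<Sum>k<(n+1)^2. (1 / (real n + 1)) * indicator (apx M \<xi> n k) x)"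

lemma apxf_eq:
  assumes "x \<in> space M" "0 \<le> \<xi> x"
  shows "apxf M \<xi> n x = (1 / (real n + 1)) * real (min ((n+1)^2) (nat \<lfloor>\<xi> x / (1 / (real n + 1))\<rfloor>))"
proof -
  have "apxf M \<xi> n x = (\<Sum>k<(n+1)^2. (1 / (real n + 1)) * (if real (Suc k) * (1 / (real n + 1)) \<le> \<xi> x then 1 else 0))"
    unfolding apxf_def apx_def using assms(1) by (intro sum.cong) (auto simp: indicator_def)
  also have "\<dots> = (1 / (real n + 1)) * real (min ((n+1)^2) (nat \<lfloor>\<xi> x / (1 / (real n + 1))\<rfloor>))"
    by (rule layer_count) (use assms in auto)
  finally show ?thesis .
qed

lemma apxf_le:
  assumes "x \<in> space M" "0 \<le> \<xi> x"
  shows "apxf M \<xi> n x \<le> \<xi> x" "0 \<le> apxf M \<xi> n x"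
proof -
  define c where "c = 1 / (real n + 1)"
  have c: "0 < c" by (simp add: c_def)
  have "real (min ((n+1)^2) (nat \<lfloor>\<xi> x / c\<rfloor>)) \<le> real (nat \<lfloor>\<xi> x / c\<rfloor>)" by simp
  also have "\<dots> \<le> \<xi> x / c" using assms c by (simp add: of_nat_nat)
  finally have "c * real (min ((n+1)^2) (nat \<lfloor>\<xi> x / c\<rfloor>)) \<le> c * (\<xi> x / c)"
    using c by (intro mult_left_mono) auto
  then show "apxf M \<xi> n x \<le> \<xi> x" using apxf_eq[of x M \<xi> n, OF assms] c by (simp add: c_def)
  show "0 \<le> apxf M \<xi> n x" using apxf_eq[of x M \<xi> n, OF assms] by simp
qed

lemma apxf_lower:
  assumes "x \<in> space M" "0 \<le> \<xi> x" "\<xi> x \<le> real n + 1"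
  shows "\<xi> x - 1 / (real n + 1) \<le> apxf M \<xi> n x"
proof -
  define c where "c = 1 / (real n + 1)"
  have c: "0 < c" by (simp add: c_def)
  have "\<xi> x / c = \<xi> x * (real n + 1)" by (simp add: c_def)
  also have "\<dots> \<le> (real n + 1) * (real n + 1)" using assms by (intro mult_right_mono) auto
  also have "\<dots> = real (n+1) * real (n+1)" by (simp only: of_nat_add of_nat_1)
  also have "\<dots> = real ((n+1)^2)" by (simp only: of_nat_mult power2_eq_square)
  finally have le: "\<xi> x / c \<le> real ((n+1)^2)" .
  have "\<lfloor>\<xi> x / c\<rfloor> \<le> \<lfloor>real ((n+1)^2)\<rfloor>" by (rule floor_mono[OF le])
  then have "\<lfloor>\<xi> x / c\<rfloor> \<le> int ((n+1)^2)" by (simp only: floor_of_nat)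
  then have "nat \<lfloor>\<xi> x / c\<rfloor> \<le> nat (int ((n+1)^2))" by (rule nat_mono)
  then have fl: "nat \<lfloor>\<xi> x / c\<rfloor> \<le> (n+1)^2" by (simp only: nat_int)
  then have m: "min ((n+1)^2) (nat \<lfloor>\<xi> x / c\<rfloor>) = nat \<lfloor>\<xi> x / c\<rfloor>" by (rule min_absorb2)
  have y0: "0 \<le> \<xi> x / c" using assms c by simp
  have "real (nat \<lfloor>\<xi> x / c\<rfloor>) = of_int \<lfloor>\<xi> x / c\<rfloor>" using y0 by simp
  moreover have "\<xi> x / c - 1 \<le> of_int \<lfloor>\<xi> x / c\<rfloor>" using floor_correct[of "\<xi> x / c"] by linarith
  ultimately have "\<xi> x / c - 1 \<le> real (nat \<lfloor>\<xi> x / c\<rfloor>)" by simp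
  then have "c * (\<xi> x / c - 1) \<le> c * real (nat \<lfloor>\<xi> x / c\<rfloor>)" using c by (intro mult_left_mono) auto
  then show ?thesis using apxf_eq[of x M \<xi> n, OF assms(1,2)] c m by (simp add: c_def right_diff_distrib)
qed

lemma apxf_tendsto:
  assumes "x \<in> space M" "0 \<le> \<xi> x"
  shows "(\<lambda>n. apxf M \<xi> n x) \<longlonglongrightarrow> \<xi> x"
proof (rule tendsto_sandwich[where f="\<lambda>n. \<xi> x - 1 / (real n + 1)" and h="\<lambda>n. \<xi> x"])
  obtain n0 where n0: "\<xi> x \<le> real n0" using real_arch_simple by blast
  show "\<forall>\<^sub>F n in sequentially. \<xi> x - 1 / (real n + 1) \<le> apxf M \<xi> n x"
    unfolding eventually_sequentially
    by (intro exI[of _ n0] allI impI apxf_lower assms) (use n0 in auto)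
  show "\<forall>\<^sub>F n in sequentially. apxf M \<xi> n x \<le> \<xi> x"
    using apxf_le[of x M \<xi>, OF assms] by auto
  show "(\<lambda>n. \<xi> x - 1 / (real n + 1)) \<longlonglongrightarrow> \<xi> x"
    using tendsto_diff[OF tendsto_const LIMSEQ_inverse_real_of_nat_add[of 0]] by (simp add: inverse_eq_divide add.commute)
qed auto

lemma apx_sets:
  assumes [measurable]: "\<xi> \<in> borel_measurable M"
  shows "apx M \<xi> n k \<in> sets M"
  unfolding apx_def by measurable

lemma apx_dec: "apx M \<xi> n (Suc k) \<subseteq> apx M \<xi> n k"
  unfolding apx_def
proof safe
  fix x assume "real (Suc (Suc k)) * (1 / (real n + 1)) \<le> \<xi> x"
  moreover have "real (Suc k) * (1 / (real n + 1)) \<le> real (Suc (Suc k)) * (1 / (real n + 1))"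
    by (intro mult_right_mono) auto
  ultimately show "real (Suc k) * (1 / (real n + 1)) \<le> \<xi> x" by linarith
qed

lemma K_gen:
  fixes W :: "'a \<Rightarrow> ennreal" and \<xi> :: "'a \<Rightarrow> real"
  assumes P: "prob_space M" and al: "atomless M" and cu: "coherent_utility M u" and li: "law_invariant M u"
    and Z: "Z \<in> determining_set M u"
    and Wm[measurable]: "W \<in> borel_measurable M"
    and Wh: "\<forall>B\<in>sets M. \<exists>h. h \<in> borel_measurable M \<and> (AE x in M. 0 \<le> h x \<and> h x \<le> 1)
              \<and> integral\<^sup>L M h = measure M B
              \<and> (\<integral>\<^sup>+ x. W x * indicator B x \<partial>M) = ennreal (\<integral>x. Z x * h x \<partial>M)"
    and Wfin: "AE x in M. W x < \<top>"
    and \<xi>m[measurable]: "\<xi> \<in> borel_measurable M" and \<xi>p: "\<forall>x\<in>space M. 0 \<le> \<xi> x"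
    and bound: "\<forall>Z'\<in>determining_set M u. (\<integral>\<^sup>+ x. ennreal (Z' x * \<xi> x) \<partial>M) \<le> C"
  shows "(\<integral>\<^sup>+ x. W x * ennreal (\<xi> x) \<partial>M) \<le> C"
proof -
  interpret prob_space M by fact
  note Zd = det_set_density[OF Z]
  have step: "(\<integral>\<^sup>+ x. W x * ennreal (apxf M \<xi> n x) \<partial>M) \<le> C" for n
  proof -
    define c where "c = 1 / (real n + 1)"
    define N where "N = (n + 1)^2"
    define A where "A = apx M \<xi> n"
    have c: "0 < c" by (simp add: c_def)
    have As: "\<forall>k. A k \<in> sets M" unfolding A_def using apx_sets[OF \<xi>m] by auto
    have dec: "\<forall>k. A (Suc k) \<subseteq> A k" unfolding A_def using apx_dec[of M \<xi> n] by blast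
    have "\<forall>k. \<exists>h. h \<in> borel_measurable M \<and> (AE x in M. 0 \<le> h x \<and> h x \<le> 1)
              \<and> integral\<^sup>L M h = measure M (A k)
              \<and> (\<integral>\<^sup>+ x. W x * indicator (A k) x \<partial>M) = ennreal (\<integral>x. Z x * h x \<partial>M)"
      using Wh As by auto
    then have "\<exists>h. \<forall>k. h k \<in> borel_measurable M \<and> (AE x in M. 0 \<le> h k x \<and> h k x \<le> 1)
              \<and> integral\<^sup>L M (h k) = measure M (A k)
              \<and> (\<integral>\<^sup>+ x. W x * indicator (A k) x \<partial>M) = ennreal (\<integral>x. Z x * h k x \<partial>M)"
      by (rule choice)
    then obtain h where h: "\<forall>k. h k \<in> borel_measurable M \<and> (AE x in M. 0 \<le> h k x \<and> h k x \<le> 1)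
              \<and> integral\<^sup>L M (h k) = measure M (A k)
              \<and> (\<integral>\<^sup>+ x. W x * indicator (A k) x \<partial>M) = ennreal (\<integral>x. Z x * h k x \<partial>M)"
      by blast
    have hZ: "0 \<le> (\<integral>x. Z x * h k x \<partial>M)" for k
    proof (rule integral_nonneg_AE)
      have "AE x in M. 0 \<le> h k x \<and> h k x \<le> 1" using h by blast
      then show "AE x in M. 0 \<le> Z x * h k x"
        using AE_space by eventually_elim (auto intro!: mult_nonneg_nonneg Zd(2))
    qed
    have apxf_def': "apxf M \<xi> n x = (\<Sum>k<N. c * indicator (A k) x)" for x
      unfolding apxf_def N_def c_def A_def by simp
    have "(\<integral>\<^sup>+ x. W x * ennreal (apxf M \<xi> n x) \<partial>M) = (\<integral>\<^sup>+ x. (\<Sum>k<N. ennreal c * (W x * indicator (A k) x)) \<partial>M)"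
    proof (intro nn_integral_cong)
      fix x
      have "ennreal (apxf M \<xi> n x) = (\<Sum>k<N. ennreal (c * indicator (A k) x))"
        unfolding apxf_def' using c by (subst sum_ennreal) auto
      also have "\<dots> = (\<Sum>k<N. ennreal c * indicator (A k) x)"
        using c by (simp add: ennreal_mult ennreal_indicator)
      finally have e: "ennreal (apxf M \<xi> n x) = (\<Sum>k<N. ennreal c * indicator (A k) x)" .
      show "W x * ennreal (apxf M \<xi> n x) = (\<Sum>k<N. ennreal c * (W x * indicator (A k) x))"
        unfolding e sum_distrib_left by (intro sum.cong refl) (simp only: ac_simps)
    qed
    also have "\<dots> = (\<Sum>k<N. ennreal c * (\<integral>\<^sup>+ x. W x * indicator (A k) x \<partial>M))"
      using As by (subst nn_integral_sum) (auto simp: nn_integral_cmult)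
    also have "\<dots> = (\<Sum>k<N. ennreal (c * (\<integral>x. Z x * h k x \<partial>M)))"
      using h hZ c by (simp add: ennreal_mult)
    also have "\<dots> = ennreal (\<Sum>k<N. c * (\<integral>x. Z x * h k x \<partial>M))"
      using hZ c by (subst sum_ennreal) auto
    also have "\<dots> \<le> C"
    proof (rule K_simple[OF P al cu li Z As dec])
      show "0 \<le> c" using c by simp
      show "\<forall>k. h k \<in> borel_measurable M" "\<forall>k. AE x in M. 0 \<le> h k x \<and> h k x \<le> 1"
        "\<forall>k. integral\<^sup>L M (h k) = measure M (A k)" using h by auto
      show "\<forall>Z'\<in>determining_set M u. (\<integral>\<^sup>+ x. ennreal (Z' x * (\<Sum>k<N. c * indicator (A k) x)) \<partial>M) \<le> C"
      proof
        fix Z' assume Z': "Z' \<in> determining_set M u"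
        have "(\<integral>\<^sup>+ x. ennreal (Z' x * (\<Sum>k<N. c * indicator (A k) x)) \<partial>M) \<le> (\<integral>\<^sup>+ x. ennreal (Z' x * \<xi> x) \<partial>M)"
        proof (intro nn_integral_mono ennreal_leI mult_left_mono)
          fix x assume x: "x \<in> space M"
          show "(\<Sum>k<N. c * indicator (A k) x) \<le> \<xi> x"
            using apxf_le(1)[of x M \<xi> n] x \<xi>p by (simp add: apxf_def')
          show "0 \<le> Z' x" using det_set_density(2)[OF Z' x] .
        qed
        then show "(\<integral>\<^sup>+ x. ennreal (Z' x * (\<Sum>k<N. c * indicator (A k) x)) \<partial>M) \<le> C"
          using bound Z' by (meson order_trans)
      qed
    qed
    finally show ?thesis .
  qed
  have "AE x in M. liminf (\<lambda>n. W x * ennreal (apxf M \<xi> n x)) = W x * ennreal (\<xi> x)"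
    using Wfin AE_space
  proof eventually_elim
    case (elim x)
    have "(\<lambda>n. W x * ennreal (apxf M \<xi> n x)) \<longlonglongrightarrow> W x * ennreal (\<xi> x)"
      using elim \<xi>p by (intro ennreal_tendsto_cmult tendsto_ennrealI apxf_tendsto) auto
    then show ?case by (intro lim_imp_Liminf) auto
  qed
  then have "(\<integral>\<^sup>+ x. W x * ennreal (\<xi> x) \<partial>M) = (\<integral>\<^sup>+ x. liminf (\<lambda>n. W x * ennreal (apxf M \<xi> n x)) \<partial>M)"
    by (intro nn_integral_cong_AE) (auto elim!: eventually_mono)
  also have "\<dots> \<le> liminf (\<lambda>n. (\<integral>\<^sup>+ x. W x * ennreal (apxf M \<xi> n x) \<partial>M))"
  proof (rule nn_integral_liminf)
    fix n
    have "(\<lambda>x. apxf M \<xi> n x) \<in> borel_measurable M"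
      unfolding apxf_def using apx_sets[OF \<xi>m] by auto
    then show "(\<lambda>x. W x * ennreal (apxf M \<xi> n x)) \<in> borel_measurable M" by measurable
  qed
  also have "\<dots> \<le> limsup (\<lambda>n. (\<integral>\<^sup>+ x. W x * ennreal (apxf M \<xi> n x) \<partial>M))"
    by (rule Liminf_le_Limsup) simp
  also have "\<dots> \<le> C"
    by (rule Limsup_bounded) (use step in auto)
  finally show ?thesis .
qed

lemma EQ_integrable:
  fixes Q X :: "'a \<Rightarrow> real"
  assumes Qm[measurable]: "Q \<in> borel_measurable M" and Qp: "AE x in M. 0 \<le> Q x"
    and Xm[measurable]: "X \<in> borel_measurable M" and int: "integrable M (\<lambda>x. Q x * X x)"
  shows "EQ M Q X = ereal (\<integral>x. Q x * X x \<partial>M)"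
proof -
  have p: "(\<integral>\<^sup>+ x. ennreal (Q x * max (X x) 0) \<partial>M) = (\<integral>\<^sup>+ x. ennreal (Q x * X x) \<partial>M)"
  proof (rule nn_integral_cong_AE)
    show "AE x in M. ennreal (Q x * max (X x) 0) = ennreal (Q x * X x)"
      using Qp
    proof eventually_elim
      case (elim x)
      show ?case
      proof (cases "0 \<le> X x")
        case True then show ?thesis by (simp add: max_absorb1)
      next
        case False
        then have "Q x * X x \<le> 0" using elim by (simp add: mult_nonneg_nonpos)
        then show ?thesis using False by (simp add: max_absorb2 ennreal_neg)
      qed
    qed
  qed
  have n: "(\<integral>\<^sup>+ x. ennreal (Q x * max (- X x) 0) \<partial>M) = (\<integral>\<^sup>+ x. ennreal (- (Q x * X x)) \<partial>M)"
  proof (rule nn_integral_cong_AE)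
    show "AE x in M. ennreal (Q x * max (- X x) 0) = ennreal (- (Q x * X x))"
      using Qp
    proof eventually_elim
      case (elim x)
      show ?case
      proof (cases "0 \<le> - X x")
        case True then show ?thesis by (simp add: max_absorb1)
      next
        case False
        then have "- (Q x * X x) \<le> 0" using elim by (simp add: mult_nonneg_nonneg)
        then show ?thesis using False by (simp add: max_absorb2 ennreal_neg)
      qed
    qed
  qed
  have fin1: "(\<integral>\<^sup>+ x. ennreal (Q x * X x) \<partial>M) \<noteq> \<top>"
  proof -
    have "(\<integral>\<^sup>+ x. ennreal (Q x * X x) \<partial>M) \<le> (\<integral>\<^sup>+ x. ennreal (norm (Q x * X x)) \<partial>M)"
      by (intro nn_integral_mono ennreal_leI) auto
    also have "\<dots> < \<top>" using int by (simp add: integrable_iff_bounded)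
    finally show ?thesis by simp
  qed
  have fin2: "(\<integral>\<^sup>+ x. ennreal (- (Q x * X x)) \<partial>M) \<noteq> \<top>"
  proof -
    have "(\<integral>\<^sup>+ x. ennreal (- (Q x * X x)) \<partial>M) \<le> (\<integral>\<^sup>+ x. ennreal (norm (Q x * X x)) \<partial>M)"
      by (intro nn_integral_mono ennreal_leI) auto
    also have "\<dots> < \<top>" using int by (simp add: integrable_iff_bounded)
    finally show ?thesis by simp
  qed
  have e1: "enn2ereal (\<integral>\<^sup>+ x. ennreal (Q x * X x) \<partial>M) = ereal (enn2real (\<integral>\<^sup>+ x. ennreal (Q x * X x) \<partial>M))"
    using fin1 by (metis enn2ereal_ennreal enn2real_nonneg ennreal_enn2real_if)
  have e2: "enn2ereal (\<integral>\<^sup>+ x. ennreal (- (Q x * X x)) \<partial>M) = ereal (enn2real (\<integral>\<^sup>+ x. ennreal (- (Q x * X x)) \<partial>M))"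
    using fin2 by (metis enn2ereal_ennreal enn2real_nonneg ennreal_enn2real_if)
  show ?thesis
    unfolding EQ_def Let_def p n real_lebesgue_integral_def[OF int]
    using fin2 e1 e2 by simp
qed

lemma Wh_one:
  assumes P: "prob_space M" and Z: "Z \<in> determining_set M u"
  shows "\<forall>B\<in>sets M. \<exists>h. h \<in> borel_measurable M \<and> (AE x in M. 0 \<le> h x \<and> h x \<le> 1)
              \<and> integral\<^sup>L M h = measure M B
              \<and> (\<integral>\<^sup>+ x. (\<lambda>_. 1::ennreal) x * indicator B x \<partial>M) = ennreal (\<integral>x. Z x * h x \<partial>M)"
proof
  interpret prob_space M by fact
  note Zd = det_set_density[OF Z]
  fix B assume B: "B \<in> sets M"
  show "\<exists>h. h \<in> borel_measurable M \<and> (AE x in M. 0 \<le> h x \<and> h x \<le> 1)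
              \<and> integral\<^sup>L M h = measure M B
              \<and> (\<integral>\<^sup>+ x. (\<lambda>_. 1::ennreal) x * indicator B x \<partial>M) = ennreal (\<integral>x. Z x * h x \<partial>M)"
  proof (intro exI[of _ "\<lambda>x. measure M B"] conjI)
    show "AE x in M. 0 \<le> measure M B \<and> measure M B \<le> 1" by auto
    show "(\<integral>x. measure M B \<partial>M) = measure M B" by (simp add: prob_space)
    have "(\<integral>x. Z x * measure M B \<partial>M) = (\<integral>x. Z x \<partial>M) * measure M B" by simp
    also have "\<dots> = measure M B" using Zd(4) by simp
    finally have e: "(\<integral>x. Z x * measure M B \<partial>M) = measure M B" .
    have "(\<integral>\<^sup>+ x. (\<lambda>_. 1::ennreal) x * indicator B x \<partial>M) = emeasure M B" using B by simp
    then show "(\<integral>\<^sup>+ x. (\<lambda>_. 1::ennreal) x * indicator B x \<partial>M) = ennreal (\<integral>x. Z x * measure M B \<partial>M)"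
      unfolding e by (simp add: emeasure_eq_measure)
  qed simp
qed

lemma Wh_nce:
  assumes P: "prob_space M" and sub: "subalgebra M G" and Z: "Z \<in> determining_set M u"
  shows "\<forall>B\<in>sets M. \<exists>h. h \<in> borel_measurable M \<and> (AE x in M. 0 \<le> h x \<and> h x \<le> 1)
              \<and> integral\<^sup>L M h = measure M B
              \<and> (\<integral>\<^sup>+ x. nn_cond_exp M G (\<lambda>x. ennreal (Z x)) x * indicator B x \<partial>M) = ennreal (\<integral>x. Z x * h x \<partial>M)"
proof
  interpret prob_space M by fact
  interpret finite_measure_subalgebra M G by unfold_locales (rule sub)
  note Zd = det_set_density[OF Z]
  have Zm[measurable]: "Z \<in> borel_measurable M" by (rule Zd(1))
  fix B assume B[measurable]: "B \<in> sets M"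
  define V where "V = nn_cond_exp M G (indicator B)"
  define h where "h x = enn2real (V x)" for x
  have Vm[measurable]: "V \<in> borel_measurable M" "V \<in> borel_measurable G" unfolding V_def by auto
  have hm[measurable]: "h \<in> borel_measurable M" unfolding h_def by measurable
  have V1: "AE x in M. V x \<le> 1"
  proof -
    have "AE x in M. V x \<le> nn_cond_exp M G (\<lambda>x. 1) x"
      unfolding V_def by (rule nn_cond_exp_mono) (auto split: split_indicator)
    moreover have "AE x in M. (\<lambda>x. 1::ennreal) x = nn_cond_exp M G (\<lambda>x. 1) x"
      by (rule nn_cond_exp_F_meas) simp
    ultimately show ?thesis by eventually_elim simp
  qed
  have Vh: "AE x in M. V x = ennreal (h x)"
  proof (rule eventually_mono[OF V1])
    fix x assume "V x \<le> 1"
    then have "V x < \<top>" using ennreal_one_less_top by (rule le_less_trans)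
    then show "V x = ennreal (h x)" unfolding h_def by (simp add: ennreal_enn2real_if less_top)
  qed
  have h01: "AE x in M. 0 \<le> h x \<and> h x \<le> 1"
  proof (rule eventually_mono[OF V1])
    fix x assume "V x \<le> 1"
    then have "enn2real (V x) \<le> enn2real 1" by (intro enn2real_mono) auto
    then show "0 \<le> h x \<and> h x \<le> 1" unfolding h_def by simp
  qed
  have "(\<integral>\<^sup>+ x. V x \<partial>M) = (\<integral>\<^sup>+ x. (\<lambda>x. 1) x * V x \<partial>M)" by simp
  also have "\<dots> = (\<integral>\<^sup>+ x. (\<lambda>x. 1) x * indicator B x \<partial>M)"
    unfolding V_def by (rule nn_cond_exp_intg) auto
  also have "\<dots> = emeasure M B" by simp
  finally have intV: "(\<integral>\<^sup>+ x. V x \<partial>M) = emeasure M B" .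
  have inth: "integral\<^sup>L M h = measure M B"
  proof -
    have "integral\<^sup>L M h = enn2real (\<integral>\<^sup>+ x. ennreal (h x) \<partial>M)"
      using h01 by (intro integral_eq_nn_integral) auto
    also have "(\<integral>\<^sup>+ x. ennreal (h x) \<partial>M) = (\<integral>\<^sup>+ x. V x \<partial>M)"
      using Vh by (intro nn_integral_cong_AE) auto
    finally show ?thesis using intV by (simp add: measure_def)
  qed
  have Zh_int: "integrable M (\<lambda>x. Z x * h x)"
  proof (rule Bochner_Integration.integrable_bound[OF Zd(3)])
    show "(\<lambda>x. Z x * h x) \<in> borel_measurable M" by measurable
    show "AE x in M. norm (Z x * h x) \<le> norm (Z x)"
      using h01 by eventually_elim (auto simp: abs_mult intro!: mult_left_le)
  qed
  have "(\<integral>\<^sup>+ x. nn_cond_exp M G (\<lambda>x. ennreal (Z x)) x * indicator B x \<partial>M)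
      = (\<integral>\<^sup>+ x. nn_cond_exp M G (\<lambda>x. ennreal (Z x)) x * V x \<partial>M)"
    unfolding V_def by (rule nn_cond_exp_intg[symmetric]) auto
  also have "\<dots> = (\<integral>\<^sup>+ x. V x * nn_cond_exp M G (\<lambda>x. ennreal (Z x)) x \<partial>M)"
    by (simp add: mult.commute)
  also have "\<dots> = (\<integral>\<^sup>+ x. V x * ennreal (Z x) \<partial>M)"
    by (rule nn_cond_exp_intg) auto
  also have "\<dots> = (\<integral>\<^sup>+ x. ennreal (Z x * h x) \<partial>M)"
  proof (rule nn_integral_cong_AE)
    show "AE x in M. V x * ennreal (Z x) = ennreal (Z x * h x)"
      using Vh AE_space
    proof eventually_elim
      case (elim x)
      then show ?case using Zd(2)[of x] by (simp add: ennreal_mult' mult.commute)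
    qed
  qed
  also have "\<dots> = ennreal (\<integral>x. Z x * h x \<partial>M)"
  proof (rule nn_integral_eq_integral[OF Zh_int])
    show "AE x in M. 0 \<le> Z x * h x"
      using h01 AE_space by eventually_elim (auto intro!: mult_nonneg_nonneg Zd(2))
  qed
  finally show "\<exists>h. h \<in> borel_measurable M \<and> (AE x in M. 0 \<le> h x \<and> h x \<le> 1)
              \<and> integral\<^sup>L M h = measure M B
              \<and> (\<integral>\<^sup>+ x. nn_cond_exp M G (\<lambda>x. ennreal (Z x)) x * indicator B x \<partial>M) = ennreal (\<integral>x. Z x * h x \<partial>M)"
    using hm h01 inth by blast
qed

theorem corollary3p5:
  fixes M :: "'a measure" and u :: "('a \<Rightarrow> real) \<Rightarrow> ereal"
    and Y :: "'a \<Rightarrow> 'b::euclidean_space" and X :: "'a \<Rightarrow> real"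
  assumes "prob_space M"
    and "atomless M"
    and "coherent_utility M u"
    and "law_invariant M u"
    and "Y \<in> borel_measurable M"
    and "X \<in> L1s M (determining_set M u)"
  shows "factor_utility M (determining_set M u) X Y = u (cond_exp_given M Y X)"
proof -
  note P = assms(1) and al = assms(2) and cu = assms(3) and li = assms(4)
  interpret prob_space M by fact
  define G where "G = vimage_algebra (space M) Y borel"
  define D where "D = determining_set M u"
  have sub: "subalgebra M G"
    unfolding subalgebra_def G_def using assms(5)[unfolded measurable_iff_sets] by simp
  interpret finite_measure_subalgebra M G by unfold_locales (rule sub)
  have Xm[measurable]: "X \<in> borel_measurable M" using assms(6) unfolding L1s_def by auto
  have lim: "(\<lambda>n::nat. SUP Z\<in>D. \<integral>\<^sup>+ x. ennreal (Z x * (if \<bar>X x\<bar> > real n then \<bar>X x\<bar> else 0)) \<partial>M) \<longlonglongrightarrow> 0"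
    using assms(6) unfolding L1s_def D_def by auto
  have "\<forall>\<^sub>F n in sequentially. (SUP Z\<in>D. \<integral>\<^sup>+ x. ennreal (Z x * (if \<bar>X x\<bar> > real n then \<bar>X x\<bar> else 0)) \<partial>M) < 1"
    by (rule order_tendstoD(2)[OF lim]) simp
  then obtain n where n: "(SUP Z\<in>D. \<integral>\<^sup>+ x. ennreal (Z x * (if \<bar>X x\<bar> > real n then \<bar>X x\<bar> else 0)) \<partial>M) < 1"
    by (auto simp: eventually_sequentially)
  define C where "C = ennreal (real n + 1)"
  have Cfin: "C < \<top>" unfolding C_def by simp
  define T where "T x = (if \<bar>X x\<bar> > real n then \<bar>X x\<bar> else 0)" for x
  have Tm[measurable]: "T \<in> borel_measurable M" unfolding T_def by measurable
  have T0: "0 \<le> T x" for x unfolding T_def by auto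
  have bound: "\<forall>Z'\<in>D. (\<integral>\<^sup>+ x. ennreal (Z' x * \<bar>X x\<bar>) \<partial>M) \<le> C"
  proof
    fix Z' assume Z': "Z' \<in> D"
    note Zd = det_set_density[OF Z'[unfolded D_def]]
    have [measurable]: "Z' \<in> borel_measurable M" by (rule Zd(1))
    have "(\<integral>\<^sup>+ x. ennreal (Z' x * \<bar>X x\<bar>) \<partial>M)
        \<le> (\<integral>\<^sup>+ x. ennreal (Z' x * real n) + ennreal (Z' x * T x) \<partial>M)"
    proof (intro nn_integral_mono)
      fix x assume x: "x \<in> space M"
      have z: "0 \<le> Z' x" by (rule Zd(2)[OF x])
      have "\<bar>X x\<bar> \<le> real n + T x" unfolding T_def by auto
      then have "Z' x * \<bar>X x\<bar> \<le> Z' x * (real n + T x)" using z by (rule mult_left_mono)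
      also have "\<dots> = Z' x * real n + Z' x * T x" by (simp add: distrib_left)
      finally have le: "Z' x * \<bar>X x\<bar> \<le> Z' x * real n + Z' x * T x" .
      have "ennreal (Z' x * real n) + ennreal (Z' x * T x) = ennreal (Z' x * real n + Z' x * T x)"
        using z T0[of x] by (intro ennreal_plus[symmetric]) auto
      then show "ennreal (Z' x * \<bar>X x\<bar>) \<le> ennreal (Z' x * real n) + ennreal (Z' x * T x)"
        using le by (simp add: ennreal_leI)
    qed
    also have "\<dots> = (\<integral>\<^sup>+ x. ennreal (Z' x * real n) \<partial>M) + (\<integral>\<^sup>+ x. ennreal (Z' x * T x) \<partial>M)"
      by (rule nn_integral_add) auto
    also have "(\<integral>\<^sup>+ x. ennreal (Z' x * real n) \<partial>M) = ennreal (real n)"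
    proof -
      have "(\<integral>\<^sup>+ x. ennreal (Z' x * real n) \<partial>M) = ennreal (\<integral>x. Z' x * real n \<partial>M)"
        using Zd by (intro nn_integral_eq_integral) auto
      also have "(\<integral>x. Z' x * real n \<partial>M) = (\<integral>x. Z' x \<partial>M) * real n" by simp
      finally show ?thesis using Zd(4) by simp
    qed
    also have "(\<integral>\<^sup>+ x. ennreal (Z' x * T x) \<partial>M) \<le> 1"
    proof -
      have "(\<integral>\<^sup>+ x. ennreal (Z' x * T x) \<partial>M) \<le> (SUP Z\<in>D. \<integral>\<^sup>+ x. ennreal (Z x * T x) \<partial>M)"
        by (rule SUP_upper[OF Z'])
      also have "\<dots> < 1" using n unfolding T_def .
      finally show ?thesis by simp
    qed
    then have "ennreal (real n) + (\<integral>\<^sup>+ x. ennreal (Z' x * T x) \<partial>M) \<le> ennreal (real n) + 1"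
      by (rule add_left_mono)
    also have "ennreal (real n) + 1 = C" unfolding C_def by (simp add: ennreal_plus)
    finally show "(\<integral>\<^sup>+ x. ennreal (Z' x * \<bar>X x\<bar>) \<partial>M) \<le> C" .
  qed
  obtain Z0 where Z0: "Z0 \<in> D" using det_set_nonempty[OF cu] unfolding D_def by auto
  have "(\<integral>\<^sup>+ x. (\<lambda>_. 1::ennreal) x * ennreal \<bar>X x\<bar> \<partial>M) \<le> C"
    by (rule K_gen[OF P al cu li Z0[unfolded D_def] _ Wh_one[OF P Z0[unfolded D_def]]])
       (use bound in \<open>auto simp: D_def\<close>)
  then have Xint: "integrable M X"
    using Cfin by (intro integrableI_bounded) auto
  define W where "W = real_cond_exp M G X"
  have Wm[measurable]: "W \<in> borel_measurable M" unfolding W_def by simp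
  have WmG[measurable]: "W \<in> borel_measurable G" unfolding W_def by simp
  have key: "EQ M (real_cond_exp M G Z) X = EQ M Z W" if Z: "Z \<in> D" for Z
  proof -
    note Zd = det_set_density[OF Z[unfolded D_def]]
    have Zm[measurable]: "Z \<in> borel_measurable M" by (rule Zd(1))
    define Q where "Q = real_cond_exp M G Z"
    define Wz where "Wz = nn_cond_exp M G (\<lambda>x. ennreal (Z x))"
    have Qm[measurable]: "Q \<in> borel_measurable M" "Q \<in> borel_measurable G" unfolding Q_def by simp_all
    have Wzm[measurable]: "Wz \<in> borel_measurable M" "Wz \<in> borel_measurable G" unfolding Wz_def by simp_all
    have intWz: "(\<integral>\<^sup>+ x. Wz x \<partial>M) = ennreal 1"
    proof -
      have "(\<integral>\<^sup>+ x. Wz x \<partial>M) = (\<integral>\<^sup>+ x. (\<lambda>x. 1) x * Wz x \<partial>M)" by simp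
      also have "\<dots> = (\<integral>\<^sup>+ x. (\<lambda>x. 1) x * ennreal (Z x) \<partial>M)"
        unfolding Wz_def by (rule nn_cond_exp_intg) auto
      also have "\<dots> = ennreal (\<integral>x. Z x \<partial>M)"
        using Zd by (simp add: nn_integral_eq_integral)
      finally show ?thesis using Zd(4) by simp
    qed
    have Wzfin: "AE x in M. Wz x < \<top>"
      using nn_integral_noteq_infinite[OF Wzm(1)] intWz by (simp add: less_top)
    have boundWz: "(\<integral>\<^sup>+ x. Wz x * ennreal \<bar>X x\<bar> \<partial>M) \<le> C"
      unfolding Wz_def
      by (rule K_gen[OF P al cu li Z[unfolded D_def] _ Wh_nce[OF P sub Z[unfolded D_def]]])
         (use bound Wzfin in \<open>auto simp: D_def Wz_def\<close>)
    have neg0: "AE x in M. nn_cond_exp M G (\<lambda>x. ennreal (- Z x)) x = 0"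
    proof -
      have "AE x in M. nn_cond_exp M G (\<lambda>x. ennreal (- Z x)) x = nn_cond_exp M G (\<lambda>x. 0) x"
        by (rule nn_cond_exp_cong) (use Zd(2) in \<open>auto simp: ennreal_neg intro!: AE_I2\<close>)
      moreover have "AE x in M. (\<lambda>x. 0::ennreal) x = nn_cond_exp M G (\<lambda>x. 0) x"
        by (rule nn_cond_exp_F_meas) simp
      ultimately show ?thesis by eventually_elim simp
    qed
    have QWz: "AE x in M. ennreal (Q x) = Wz x \<and> 0 \<le> Q x"
      using neg0 Wzfin
    proof eventually_elim
      case (elim x)
      then have "Q x = enn2real (Wz x)" unfolding Q_def Wz_def real_cond_exp_def by simp
      then show ?case using elim by (simp add: ennreal_enn2real_if less_top)
    qed
    have QX_int: "integrable M (\<lambda>x. Q x * X x)"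
    proof (rule integrableI_bounded)
      have "(\<integral>\<^sup>+ x. ennreal (norm (Q x * X x)) \<partial>M) = (\<integral>\<^sup>+ x. Wz x * ennreal \<bar>X x\<bar> \<partial>M)"
      proof (rule nn_integral_cong_AE)
        show "AE x in M. ennreal (norm (Q x * X x)) = Wz x * ennreal \<bar>X x\<bar>"
          using QWz
        proof eventually_elim
          case (elim x)
          then show ?case by (auto simp: abs_mult ennreal_mult)
        qed
      qed
      then show "(\<integral>\<^sup>+ x. ennreal (norm (Q x * X x)) \<partial>M) < \<infinity>"
        using boundWz Cfin by simp
    qed auto
    define Va where "Va = nn_cond_exp M G (\<lambda>x. ennreal \<bar>X x\<bar>)"
    have Vam[measurable]: "Va \<in> borel_measurable M" "Va \<in> borel_measurable G" unfolding Va_def by simp_all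
    have ZW_int: "integrable M (\<lambda>x. Z x * W x)"
    proof (rule integrableI_bounded)
      have "(\<integral>\<^sup>+ x. ennreal (norm (Z x * W x)) \<partial>M) \<le> (\<integral>\<^sup>+ x. ennreal (Z x) * Va x \<partial>M)"
      proof (rule nn_integral_mono_AE)
        show "AE x in M. ennreal (norm (Z x * W x)) \<le> ennreal (Z x) * Va x"
          using real_cond_exp_abs[OF Xm] AE_space unfolding W_def Va_def
        proof eventually_elim
          case (elim x)
          then have "ennreal (Z x) * ennreal \<bar>real_cond_exp M G X x\<bar> \<le> ennreal (Z x) * nn_cond_exp M G (\<lambda>x. ennreal \<bar>X x\<bar>) x"
            by (intro mult_left_mono) auto
          then show ?case using Zd(2)[OF elim(2)] by (simp add: abs_mult ennreal_mult)
        qed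
      qed
      also have "\<dots> = (\<integral>\<^sup>+ x. Va x * ennreal (Z x) \<partial>M)" by (simp add: mult.commute)
      also have "\<dots> = (\<integral>\<^sup>+ x. Va x * Wz x \<partial>M)"
        unfolding Wz_def by (rule nn_cond_exp_intg[symmetric]) auto
      also have "\<dots> = (\<integral>\<^sup>+ x. Wz x * Va x \<partial>M)" by (simp add: mult.commute)
      also have "\<dots> = (\<integral>\<^sup>+ x. Wz x * ennreal \<bar>X x\<bar> \<partial>M)"
        unfolding Va_def by (rule nn_cond_exp_intg) auto
      also have "\<dots> < \<infinity>" using boundWz Cfin by simp
      finally show "(\<integral>\<^sup>+ x. ennreal (norm (Z x * W x)) \<partial>M) < \<infinity>" .
    qed auto
    have e1: "(\<integral>x. Q x * W x \<partial>M) = (\<integral>x. Q x * X x \<partial>M)"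
      unfolding W_def by (rule real_cond_exp_intg(2)[OF QX_int]) auto
    have e2: "(\<integral>x. W x * Q x \<partial>M) = (\<integral>x. W x * Z x \<partial>M)"
      unfolding Q_def by (rule real_cond_exp_intg(2)) (use ZW_int in \<open>auto simp: mult.commute\<close>)
    have eqint: "(\<integral>x. Q x * X x \<partial>M) = (\<integral>x. Z x * W x \<partial>M)"
      using e1 e2 by (simp add: mult.commute)
    have "EQ M Q X = ereal (\<integral>x. Q x * X x \<partial>M)"
      by (rule EQ_integrable[OF Qm(1) _ Xm QX_int]) (use QWz in \<open>auto elim: eventually_mono\<close>)
    also have "\<dots> = ereal (\<integral>x. Z x * W x \<partial>M)" using eqint by simp
    also have "\<dots> = EQ M Z W"
      by (rule EQ_integrable[OF Zm _ Wm ZW_int, symmetric]) (use Zd(2) in \<open>auto intro: AE_I2\<close>)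
    finally show ?thesis unfolding Q_def .
  qed
  have "factor_utility M D X Y = (INF Z\<in>D. EQ M (real_cond_exp M G Z) X)"
    unfolding factor_utility_def cond_exp_given_def G_def by (simp add: image_comp)
  also have "\<dots> = (INF Z\<in>D. EQ M Z W)"
    using key by (intro INF_cong) auto
  also have "\<dots> = u W"
    unfolding D_def by (rule det_set_INF[OF cu Wm, symmetric])
  finally show ?thesis unfolding D_def W_def cond_exp_given_def G_def .
qed

end
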